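(* Let $K$ be a convex quadrilateral with bilinear map $F_K:(-1,1)^2\to K$ and $r\ge1$. Then for every $q\in P_{r-1}(K,\mathbb R)$ the tensor field $q\begin{pmatrix}0&1\\-1&0\end{pmatrix}$ belongs to $\Psi_r(K,\mathbb M)=\{(\hat\tau\circ F_K^{-1})DF_K^{-1}:$ each row of $\hat\tau$ lies in $P_{r-1,r}(\hat K)\times P_{r,r-1}(\hat K)\}$.
   Context: $\hat K=(-1,1)^2$, $F_K$ is bilinear (each component is in $Q_1(\hat K)$) and bijective onto the convex quadrilateral $K$; $DF_K$ is its Jacobian matrix (evaluated at $\hat x=F_K^{-1}(x)$). $P_{a,b}(\hat K)$ denotes polynomials of degree $\le a$ in $\hat x_1$ and $\le b$ in $\hat x_2$; $P_{r-1}(K,\mathbb R)$ denotes polynomials of total degree $\le r-1$ in the physical coordinates $x$. *)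

theory Defs
  imports "HOL-Analysis.Analysis"
begin

definition ref_square :: "(real^2) set" where
  "ref_square = {xh. \<forall>i. -1 < xh $ i \<and> xh $ i < 1}"

definition Pab :: "nat \<Rightarrow> nat \<Rightarrow> (real^2 \<Rightarrow> real) set" where
  "Pab a b = {f. \<exists>c :: nat \<Rightarrow> nat \<Rightarrow> real.
      \<forall>x. f x = (\<Sum>i\<le>a. \<Sum>j\<le>b. c i j * (x $ 1) ^ i * (x $ 2) ^ j)}"

definition Ptot :: "nat \<Rightarrow> (real^2 \<Rightarrow> real) set" where
  "Ptot n = {f. \<exists>c :: nat \<Rightarrow> nat \<Rightarrow> real.
      \<forall>x. f x = (\<Sum>i\<le>n. \<Sum>j\<le>n - i. c i j * (x $ 1) ^ i * (x $ 2) ^ j)}"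

definition Q1_map :: "(real^2 \<Rightarrow> real^2) \<Rightarrow> bool" where
  "Q1_map F \<longleftrightarrow> (\<forall>k. (\<lambda>x. F x $ k) \<in> Pab 1 1)"

definition cross2 :: "real^2 \<Rightarrow> real^2 \<Rightarrow> real" where
  "cross2 u v = u $ 1 * v $ 2 - u $ 2 * v $ 1"

text \<open>Convex (nondegenerate) quadrilateral: the open region bounded by four vertices
  z 0, z 1, z 2, z 3 listed in order, all turns strictly of the same sign.\<close>
definition convex_quadrilateral :: "(real^2) set \<Rightarrow> bool" where
  "convex_quadrilateral K \<longleftrightarrow> (\<exists>z :: nat \<Rightarrow> real^2.
      K = interior (convex hull {z 0, z 1, z 2, z 3}) \<and>
      ((\<forall>i<4. cross2 (z (Suc i mod 4) - z i) (z ((i + 2) mod 4) - z (Suc i mod 4)) > 0) \<or>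
       (\<forall>i<4. cross2 (z (Suc i mod 4) - z i) (z ((i + 2) mod 4) - z (Suc i mod 4)) < 0)))"

definition Jrot :: "real^2^2" where
  "Jrot = vector [vector [0, 1], vector [-1, 0]]"

definition Psi :: "nat \<Rightarrow> (real^2 \<Rightarrow> real^2) \<Rightarrow> (real^2) set \<Rightarrow> (real^2 \<Rightarrow> real^2^2) set" where
  "Psi r F K = {sigma. \<exists>tau :: real^2 \<Rightarrow> real^2^2.
      (\<forall>i. (\<lambda>x. tau x $ i $ 1) \<in> Pab (r - 1) r \<and> (\<lambda>x. tau x $ i $ 2) \<in> Pab r (r - 1)) \<and>
      (\<forall>x\<in>K. sigma x = tau (inv_into ref_square F x) **
                         matrix_inv (jacobian F (at (inv_into ref_square F x))))}"

end

theory Submission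
  imports Defs
begin

abbreviation mono2 :: "nat \<Rightarrow> nat \<Rightarrow> real^2 \<Rightarrow> real" where
  "mono2 i j \<equiv> (\<lambda>x. (x $ 1) ^ i * (x $ 2) ^ j)"

lemma Pab_mono2: "i \<le> a \<Longrightarrow> j \<le> b \<Longrightarrow> mono2 i j \<in> Pab a b"
  unfolding Pab_def
proof (intro CollectI exI allI)
  fix x :: "real^2"
  assume "i \<le> a" "j \<le> b"
  have "(\<Sum>i'\<le>a. \<Sum>j'\<le>b. (if i' = i \<and> j' = j then 1 else 0) * (x $ 1) ^ i' * (x $ 2) ^ j')
      = (\<Sum>i'\<le>a. if i' = i then (x $ 1) ^ i * (x $ 2) ^ j else 0)"
  proof (intro sum.cong refl)
    fix i' assume "i' \<in> {..a}"
    show "(\<Sum>j'\<le>b. (if i' = i \<and> j' = j then 1 else 0) * (x $ 1) ^ i' * (x $ 2) ^ j') = (if i' = i then (x $ 1) ^ i * (x $ 2) ^ j else 0)"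
    proof (cases "i' = i")
      case True
      have "(\<Sum>j'\<le>b. (if i' = i \<and> j' = j then 1 else 0) * (x $ 1) ^ i' * (x $ 2) ^ j') = (\<Sum>j'\<le>b. if j' = j then (x $ 1) ^ i * (x $ 2) ^ j else 0)"
        using True by (intro sum.cong) auto
      then show ?thesis using True \<open>j \<le> b\<close> by simp
    qed simp
  qed
  also have "\<dots> = (x $ 1) ^ i * (x $ 2) ^ j" using \<open>i \<le> a\<close> by simp
  finally show "(x $ 1) ^ i * (x $ 2) ^ j = (\<Sum>i'\<le>a. \<Sum>j'\<le>b. (if i' = i \<and> j' = j then 1 else 0) * (x $ 1) ^ i' * (x $ 2) ^ j')" by simp
qed

lemma Pab_zero: "(\<lambda>x. 0) \<in> Pab a b"
  unfolding Pab_def by (rule CollectI, rule exI[of _ "\<lambda>i j. 0"]) simp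

lemma Pab_add: "f \<in> Pab a b \<Longrightarrow> g \<in> Pab a b \<Longrightarrow> (\<lambda>x. f x + g x) \<in> Pab a b"
  unfolding Pab_def
proof (elim CollectE exE, intro CollectI)
  fix c d assume c: "\<forall>x. f x = (\<Sum>i\<le>a. \<Sum>j\<le>b. c i j * (x $ 1) ^ i * (x $ 2) ^ j)"
    and d: "\<forall>x. g x = (\<Sum>i\<le>a. \<Sum>j\<le>b. d i j * (x $ 1) ^ i * (x $ 2) ^ j)"
  show "\<exists>e. \<forall>x. f x + g x = (\<Sum>i\<le>a. \<Sum>j\<le>b. e i j * (x $ 1) ^ i * (x $ 2) ^ j)"
    by (rule exI[of _ "\<lambda>i j. c i j + d i j"]) (simp add: c d distrib_right sum.distrib)
qed

lemma Pab_scale: "f \<in> Pab a b \<Longrightarrow> (\<lambda>x. k * f x) \<in> Pab a b"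
  unfolding Pab_def
proof (elim CollectE exE, intro CollectI)
  fix c assume c: "\<forall>x. f x = (\<Sum>i\<le>a. \<Sum>j\<le>b. c i j * (x $ 1) ^ i * (x $ 2) ^ j)"
  show "\<exists>e. \<forall>x. k * f x = (\<Sum>i\<le>a. \<Sum>j\<le>b. e i j * (x $ 1) ^ i * (x $ 2) ^ j)"
    by (rule exI[of _ "\<lambda>i j. k * c i j"]) (simp add: c sum_distrib_left mult.assoc)
qed

lemma Pab_sum: "finite S \<Longrightarrow> (\<And>s. s \<in> S \<Longrightarrow> f s \<in> Pab a b) \<Longrightarrow> (\<lambda>x. \<Sum>s\<in>S. f s x) \<in> Pab a b"
  by (induction S rule: finite_induct) (auto intro: Pab_zero Pab_add)

lemma Pab_rep: "f \<in> Pab a b \<Longrightarrow> \<exists>c. f = (\<lambda>x. \<Sum>i\<le>a. \<Sum>j\<le>b. c i j * mono2 i j x)"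
  unfolding Pab_def by (auto simp: fun_eq_iff mult.assoc)

lemma Pab_mono: "f \<in> Pab a b \<Longrightarrow> a \<le> a' \<Longrightarrow> b \<le> b' \<Longrightarrow> f \<in> Pab a' b'"
  apply (drule Pab_rep)
  apply (elim exE)
  apply simp
  apply (intro Pab_sum Pab_scale Pab_mono2)
  apply auto
  done

lemma Pab_mult: "f \<in> Pab a b \<Longrightarrow> g \<in> Pab c d \<Longrightarrow> (\<lambda>x. f x * g x) \<in> Pab (a + c) (b + d)"
proof -
  assume "f \<in> Pab a b" "g \<in> Pab c d"
  then obtain e where e: "f = (\<lambda>x. \<Sum>i\<le>a. \<Sum>j\<le>b. e i j * mono2 i j x)"
    using Pab_rep by blast
  obtain h where h: "g = (\<lambda>x. \<Sum>k\<le>c. \<Sum>l\<le>d. h k l * mono2 k l x)"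
    using Pab_rep \<open>g \<in> Pab c d\<close> by blast
  have "(\<lambda>x. f x * g x) = (\<lambda>x. \<Sum>i\<le>a. \<Sum>j\<le>b. \<Sum>k\<le>c. \<Sum>l\<le>d. (e i j * h k l) * mono2 (i+k) (j+l) x)"
  proof
    fix x
    have "f x * g x = (\<Sum>i\<le>a. \<Sum>j\<le>b. (e i j * mono2 i j x) * (\<Sum>k\<le>c. \<Sum>l\<le>d. h k l * mono2 k l x))"
      unfolding e h by (simp only: sum_distrib_right)
    also have "\<dots> = (\<Sum>i\<le>a. \<Sum>j\<le>b. \<Sum>k\<le>c. \<Sum>l\<le>d. (e i j * mono2 i j x) * (h k l * mono2 k l x))"
      by (simp only: sum_distrib_left)
    also have "\<dots> = (\<Sum>i\<le>a. \<Sum>j\<le>b. \<Sum>k\<le>c. \<Sum>l\<le>d. (e i j * h k l) * mono2 (i+k) (j+l) x)"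
      by (intro sum.cong refl) (simp add: power_add mult_ac)
    finally show "f x * g x = (\<Sum>i\<le>a. \<Sum>j\<le>b. \<Sum>k\<le>c. \<Sum>l\<le>d. (e i j * h k l) * mono2 (i+k) (j+l) x)" .
  qed
  also have "\<dots> \<in> Pab (a + c) (b + d)"
    by (intro Pab_sum Pab_scale Pab_mono2) auto
  finally show ?thesis .
qed

lemma Pab_const: "(\<lambda>x. k) \<in> Pab a b"
  using Pab_scale[OF Pab_mono2[of 0 a 0 b], of k] by simp

lemma Pab_pow: "f \<in> Pab a b \<Longrightarrow> (\<lambda>x. f x ^ n) \<in> Pab (n * a) (n * b)"
  by (induction n) (auto intro: Pab_const dest: Pab_mult)

lemma Pab_comp: assumes q: "q \<in> Ptot n" and F1: "(\<lambda>x. F x $ 1) \<in> Pab 1 1" and F2: "(\<lambda>x. F x $ 2) \<in> Pab 1 1"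
  shows "(\<lambda>x. q (F x)) \<in> Pab n n"
proof -
  obtain c where c: "\<And>y. q y = (\<Sum>i\<le>n. \<Sum>j\<le>n - i. c i j * (y $ 1) ^ i * (y $ 2) ^ j)"
    using q unfolding Ptot_def by blast
  have "(\<lambda>x. q (F x)) = (\<lambda>x. \<Sum>i\<le>n. \<Sum>j\<le>n - i. c i j * ((F x $ 1) ^ i * (F x $ 2) ^ j))"
    by (simp add: c mult.assoc)
  also have "\<dots> \<in> Pab n n"
  proof (intro Pab_sum Pab_scale)
    fix i j assume "i \<in> {..n}" "j \<in> {..n - i}"
    then have "i + j \<le> n" by auto
    have "(\<lambda>x. (F x $ 1) ^ i * (F x $ 2) ^ j) \<in> Pab (i * 1 + j * 1) (i * 1 + j * 1)"
      using Pab_mult[OF Pab_pow[OF F1] Pab_pow[OF F2]] by simp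
    then show "(\<lambda>x. (F x $ 1) ^ i * (F x $ 2) ^ j) \<in> Pab n n"
      by (rule Pab_mono) (use \<open>i + j \<le> n\<close> in auto)
  qed auto
  finally show ?thesis .
qed


lemma Pab_lin2: "(\<lambda>x. \<alpha> + \<beta> * x $ 2) \<in> Pab 0 1"
  using Pab_add[OF Pab_const Pab_scale[OF Pab_mono2[of 0 0 1 1]], of \<alpha> \<beta>] by simp

lemma Pab_lin1: "(\<lambda>x. \<alpha> + \<beta> * x $ 1) \<in> Pab 1 0"
  using Pab_add[OF Pab_const Pab_scale[OF Pab_mono2[of 1 1 0 0]], of \<alpha> \<beta>] by simp

lemma ref_square_box: "ref_square = box (-1) 1"
  by (auto simp: ref_square_def mem_box_cart)

lemma sum_le1: "(\<Sum>i\<le>(1::nat). f i) = f 0 + f 1"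
  by (simp add: atMost_Suc add.commute)

theorem mainTheorem11:
  fixes K :: "(real^2) set" and F :: "real^2 \<Rightarrow> real^2" and r :: nat and q :: "real^2 \<Rightarrow> real"
  assumes "convex_quadrilateral K"
    and "Q1_map F"
    and "bij_betw F ref_square K"
    and "r \<ge> 1"
    and "q \<in> Ptot (r - 1)"
  shows "(\<lambda>x. q x *\<^sub>R Jrot) \<in> Psi r F K"
proof -
  have Fk: "\<And>k. (\<lambda>x. F x $ k) \<in> Pab 1 1" using assms(2) unfolding Q1_map_def by blast
  then have "\<forall>k. \<exists>c. \<forall>x. F x $ k = (\<Sum>i\<le>1. \<Sum>j\<le>1. c i j * (x $ 1) ^ i * (x $ 2) ^ j)"
    unfolding Pab_def by blast
  then obtain cc where cc0: "\<forall>k. \<forall>x. F x $ k = (\<Sum>i\<le>1. \<Sum>j\<le>1. cc k i j * (x $ 1) ^ i * (x $ 2) ^ j)"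
    using choice[of "\<lambda>k c. \<forall>x. F x $ k = (\<Sum>i\<le>1. \<Sum>j\<le>1. c i j * (x $ 1) ^ i * (x $ 2) ^ j)"] by blast
  have cc: "\<And>k x. F x $ k = (\<Sum>i\<le>1. \<Sum>j\<le>1. cc k i j * (x $ 1) ^ i * (x $ 2) ^ j)" using cc0 by blast
  define a :: "real^2" where "a = (\<chi> k. cc k 0 0)"
  define b :: "real^2" where "b = (\<chi> k. cc k 1 0)"
  define c :: "real^2" where "c = (\<chi> k. cc k 0 1)"
  define d :: "real^2" where "d = (\<chi> k. cc k 1 1)"
  have Feq: "F = (\<lambda>x. a + x $ 1 *\<^sub>R b + x $ 2 *\<^sub>R c + (x $ 1 * x $ 2) *\<^sub>R d)"
    by (auto simp: fun_eq_iff vec_eq_iff cc sum_le1 a_def b_def c_def d_def algebra_simps)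
  define F' :: "real^2 \<Rightarrow> real^2 \<Rightarrow> real^2" where "F' = (\<lambda>x h. h $ 1 *\<^sub>R b + h $ 2 *\<^sub>R c + (h $ 1 * x $ 2 + x $ 1 * h $ 2) *\<^sub>R d)"
  have Fder: "(F has_derivative F' x) (at x)" for x
    unfolding Feq F'_def
    by (auto intro!: derivative_eq_intros bounded_linear_vec_nth[THEN bounded_linear.has_derivative] simp: algebra_simps)
  have linF': "linear (F' x)" for x using Fder has_derivative_linear by blast
  define M where "M = (\<lambda>x. matrix (F' x))"
  have jac: "jacobian F (at x) = M x" for x
    unfolding jacobian_def M_def using frechet_derivative_at[OF Fder] by simp
  have Mv: "M x *v h = F' x h" for x h unfolding M_def using matrix_vector_mul(2)[OF linF', of x] by (simp add: fun_eq_iff)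
  have inj: "inj_on F ref_square" using assms(3) bij_betw_def by blast
  have inv: "invertible (M x)" if x: "x \<in> ref_square" for x
  proof (rule ccontr)
    assume "\<not> invertible (M x)"
    then obtain v where v0: "v \<noteq> 0" and Mv0: "M x *v v = 0"
      unfolding invertible_left_inverse matrix_left_invertible_ker by blast
    have F'v: "F' x v = 0" using Mv0 Mv by simp
    have sym: "F (x + t *\<^sub>R v) = F (x - t *\<^sub>R v)" for t
    proof -
      have "F (x + t *\<^sub>R v) - F (x - t *\<^sub>R v) = (2 * t) *\<^sub>R F' x v"
        unfolding Feq F'_def by (simp add: vec_eq_iff algebra_simps)
      then show ?thesis using F'v by simp
    qed
    have "open ref_square" by (simp add: ref_square_box open_box)
    then obtain e where e: "e > 0" "ball x e \<subseteq> ref_square" using x open_contains_ball by blast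
    define t where "t = e / (2 * norm v)"
    have nv: "norm v > 0" using v0 by simp
    have t0: "t > 0" using e nv by (simp add: t_def)
    have "norm (t *\<^sub>R v) = e / 2" using nv t0 e by (simp add: t_def)
    then have "x + t *\<^sub>R v \<in> ball x e" "x - t *\<^sub>R v \<in> ball x e"
      using e by (auto simp: dist_norm)
    then have "x + t *\<^sub>R v = x - t *\<^sub>R v" using inj_onD[OF inj sym] e by blast
    then have "t *\<^sub>R v = 0" by (simp add: vec_eq_iff)
    then show False using t0 v0 by simp
  qed
  define tau where "tau = (\<lambda>y. \<chi> i j. q (F y) * (Jrot ** M y) $ i $ j)"
  have Jr: "Jrot $ 1 $ 1 = 0" "Jrot $ 1 $ 2 = 1" "Jrot $ 2 $ 1 = -1" "Jrot $ 2 $ 2 = 0"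
    by (simp_all add: Jrot_def)
  have Ment: "M y $ k $ 1 = b $ k + y $ 2 * d $ k" "M y $ k $ 2 = c $ k + y $ 1 * d $ k" for y k
    unfolding M_def F'_def by (simp_all add: matrix_def axis_def)
  have qF: "(\<lambda>y. q (F y)) \<in> Pab (r - 1) (r - 1)" by (rule Pab_comp[OF assms(5) Fk Fk])
  have poly: "(\<lambda>x. tau x $ i $ 1) \<in> Pab (r - 1) r \<and> (\<lambda>x. tau x $ i $ 2) \<in> Pab r (r - 1)" for i
  proof -
    have e1: "(\<lambda>y. (Jrot ** M y) $ i $ 1) = (\<lambda>y. (Jrot $ i $ 1 * b $ 1 + Jrot $ i $ 2 * b $ 2) + (Jrot $ i $ 1 * d $ 1 + Jrot $ i $ 2 * d $ 2) * y $ 2)"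
      by (simp add: fun_eq_iff matrix_matrix_mult_def sum_2 Ment algebra_simps)
    have e2: "(\<lambda>y. (Jrot ** M y) $ i $ 2) = (\<lambda>y. (Jrot $ i $ 1 * c $ 1 + Jrot $ i $ 2 * c $ 2) + (Jrot $ i $ 1 * d $ 1 + Jrot $ i $ 2 * d $ 2) * y $ 1)"
      by (simp add: fun_eq_iff matrix_matrix_mult_def sum_2 Ment algebra_simps)
    have "(\<lambda>x. q (F x) * (Jrot ** M x) $ i $ 1) \<in> Pab (r - 1 + 0) (r - 1 + 1)"
      by (rule Pab_mult[OF qF]) (subst e1, rule Pab_lin2)
    moreover have "(\<lambda>x. q (F x) * (Jrot ** M x) $ i $ 2) \<in> Pab (r - 1 + 1) (r - 1 + 0)"
      by (rule Pab_mult[OF qF]) (subst e2, rule Pab_lin1)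
    ultimately show ?thesis using assms(4) by (simp add: tau_def)
  qed
  show ?thesis
    unfolding Psi_def
  proof (intro CollectI exI[of _ tau] conjI ballI allI)
    fix i show "(\<lambda>x. tau x $ i $ 1) \<in> Pab (r - 1) r" using poly by blast
  next
    fix i show "(\<lambda>x. tau x $ i $ 2) \<in> Pab r (r - 1)" using poly by blast
  next
    fix x assume xK: "x \<in> K"
    define y where "y = inv_into ref_square F x"
    have FK: "F ` ref_square = K" using bij_betw_imp_surj_on[OF assms(3)] .
    have xF: "x \<in> F ` ref_square" using xK FK by simp
    have y: "y \<in> ref_square" unfolding y_def by (rule inv_into_into[OF xF])
    have Fy: "F y = x" unfolding y_def by (rule f_inv_into_f[OF xF])
    have MM0: "M y ** matrix_inv (M y) = mat 1 \<and> matrix_inv (M y) ** M y = mat 1"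
      unfolding matrix_inv_def by (rule someI_ex) (use inv[OF y] in \<open>simp add: invertible_def\<close>)
    then have MM: "M y ** matrix_inv (M y) = mat 1" by (rule conjunct1)
    have "tau y ** matrix_inv (M y) = q x *\<^sub>R (Jrot ** M y ** matrix_inv (M y))"
    proof -
      have t: "tau y = q x *\<^sub>R (Jrot ** M y)" by (simp add: tau_def Fy vec_eq_iff)
      have "(k *\<^sub>R A) ** B = k *\<^sub>R (A ** B)" for k :: real and A B :: "real^2^2"
        by (simp add: vec_eq_iff matrix_matrix_mult_def sum_distrib_left mult.assoc)
      then show ?thesis unfolding t by simp
    qed
    also have "\<dots> = q x *\<^sub>R Jrot" by (simp only: MM matrix_mul_rid flip: matrix_mul_assoc)
    finally show "q x *\<^sub>R Jrot = tau (inv_into ref_square F x) ** matrix_inv (jacobian F (at (inv_into ref_square F x)))"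
      unfolding jac y_def[symmetric] by (rule sym)
  qed
qed

end
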